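(* Let $(M,d)$ be a compact metric space and $\varphi:M\to M$ continuous, and assume either (C) there is a homeomorphism $\theta$ of $M$ with $\theta\circ\theta=\mathrm{Id}_M$ and $\varphi=\theta\circ\varphi\circ\theta$ (set $\theta_n=\theta$), or (R) $\varphi$ is a homeomorphism and there is a homeomorphism $\theta$ with $\theta\circ\theta=\mathrm{Id}_M$ and $\varphi^{-1}=\theta\circ\varphi\circ\theta$ (set $\theta_n=\theta\circ\varphi^{n-1}$). Then $h_\varphi(\mathbb Q\circ\theta)=h_\varphi(\mathbb Q)$ for every $\mathbb Q\in\mathcal P_\varphi(M)$, and $\mathfrak p_\varphi(\mathcal G\circ\theta)=\mathfrak p_\varphi(\mathcal G)$ for every $\mathcal G\in\mathcal A(M)$, where $\mathcal G\circ\theta=\{G_n\circ\theta_n\}$.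
   Context: $\mathcal P_\varphi(M)$: $\varphi$-invariant Borel probability measures ($\mathbb Q\circ\theta$ is again invariant); $h_\varphi$: Kolmogorov–Sinai entropy. $C(M),B(M)$ continuous/bounded Borel real functions, sup norm; $S_nG=\sum_{k<n}G\circ\varphi^k$; $\mathcal A(M)$: sequences $\{G_n\}\subset B(M)$ with some $\{G^{(k)}\}\subset C(M)$ such that $\lim_k\limsup_nn^{-1}\|G_n-S_nG^{(k)}\|_\infty=0$. $B_n(x,\epsilon)=\{y:d(\varphi^ky,\varphi^kx)<\epsilon,0\le k<n\}$. Topological pressure: $\mathfrak p_\varphi(\mathcal G)=\lim_{\epsilon\downarrow0}\limsup_nn^{-1}\log\inf\{\sum_{x\in E}e^{G_n(x)}:E\text{ finite},\bigcup_{x\in E}B_n(x,\epsilon)=M\}\in(-\infty,+\infty]$. *)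

theory Defs
  imports "HOL-Analysis.Analysis" "HOL-Probability.Probability"
begin

definition invariant_measures :: "('a::topological_space \<Rightarrow> 'a) \<Rightarrow> 'a measure set" where
  "invariant_measures \<phi> =
     {Q. prob_space Q \<and> sets Q = sets borel \<and> \<phi> \<in> measurable Q borel \<and> distr Q borel \<phi> = Q}"

definition fin_partitions :: "'a measure \<Rightarrow> 'a set set set" where
  "fin_partitions Q = {P. finite P \<and> P \<subseteq> sets Q \<and> disjoint P \<and> \<Union>P = space Q}"

definition part_entropy :: "'a measure \<Rightarrow> 'a set set \<Rightarrow> real" where
  "part_entropy Q P =
     - (\<Sum>A\<in>P. if measure Q A = 0 then 0 else measure Q A * ln (measure Q A))"

definition dyn_join :: "('a \<Rightarrow> 'a) \<Rightarrow> 'a set set \<Rightarrow> nat \<Rightarrow> 'a set set" where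
  "dyn_join \<phi> P n = {(\<Inter>k<n. (\<phi> ^^ k) -` (A k)) | A. \<forall>k<n. A k \<in> P}"

definition ks_entropy :: "('a \<Rightarrow> 'a) \<Rightarrow> 'a measure \<Rightarrow> ereal" where
  "ks_entropy \<phi> Q =
     (SUP P\<in>fin_partitions Q. ereal (lim (\<lambda>n. part_entropy Q (dyn_join \<phi> P n) / real n)))"

definition birkhoff_sum :: "('a \<Rightarrow> 'a) \<Rightarrow> nat \<Rightarrow> ('a \<Rightarrow> real) \<Rightarrow> 'a \<Rightarrow> real" where
  "birkhoff_sum \<phi> n g x = (\<Sum>k<n. g ((\<phi> ^^ k) x))"

definition sup_norm :: "('a \<Rightarrow> real) \<Rightarrow> real" where
  "sup_norm f = (SUP x. \<bar>f x\<bar>)"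

definition approx_additive :: "('a::topological_space \<Rightarrow> 'a) \<Rightarrow> (nat \<Rightarrow> 'a \<Rightarrow> real) set" where
  "approx_additive \<phi> =
     {G. (\<forall>n. G n \<in> borel_measurable borel \<and> bounded (range (G n))) \<and>
         (\<exists>Gk :: nat \<Rightarrow> 'a \<Rightarrow> real. (\<forall>k. continuous_on UNIV (Gk k)) \<and>
            ((\<lambda>k. limsup (\<lambda>n. ereal (sup_norm (\<lambda>x. G n x - birkhoff_sum \<phi> n (Gk k) x) / real n)))
               \<longlonglongrightarrow> 0))}"

definition bowen_ball :: "('a::metric_space \<Rightarrow> 'a) \<Rightarrow> nat \<Rightarrow> 'a \<Rightarrow> real \<Rightarrow> 'a set" where
  "bowen_ball \<phi> n x \<epsilon> = {y. \<forall>k<n. dist ((\<phi> ^^ k) y) ((\<phi> ^^ k) x) < \<epsilon>}"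

definition pressure_cover :: "('a::metric_space \<Rightarrow> 'a) \<Rightarrow> (nat \<Rightarrow> 'a \<Rightarrow> real) \<Rightarrow> nat \<Rightarrow> real \<Rightarrow> real" where
  "pressure_cover \<phi> G n \<epsilon> =
     Inf {(\<Sum>x\<in>E. exp (G n x)) | E. finite E \<and> (\<Union>x\<in>E. bowen_ball \<phi> n x \<epsilon>) = UNIV}"

definition top_pressure :: "('a::metric_space \<Rightarrow> 'a) \<Rightarrow> (nat \<Rightarrow> 'a \<Rightarrow> real) \<Rightarrow> ereal" where
  "top_pressure \<phi> G =
     Lim (at_right (0::real))
       (\<lambda>\<epsilon>. limsup (\<lambda>n. ereal (ln (pressure_cover \<phi> G n \<epsilon>) / real n)))"

end

theory Submission
  imports Defs
begin


lemma cont_funpow: "continuous_on UNIV (f::'a::topological_space \<Rightarrow> 'a) \<Longrightarrow> continuous_on UNIV (f ^^ k)"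
proof (induction k)
  case (Suc k)
  have "continuous_on UNIV (f \<circ> (f ^^ k))"
    using Suc by (metis continuous_on_compose continuous_on_subset subset_UNIV)
  then show ?case by simp
qed simp

lemma bowen_open:
  assumes "continuous_on UNIV \<phi>" shows "open (bowen_ball \<phi> n x \<epsilon>)"
proof -
  have "bowen_ball \<phi> n x \<epsilon> = (\<Inter>k\<in>{..<n}. {y. dist ((\<phi>^^k) y) ((\<phi>^^k) x) < \<epsilon>})"
    unfolding bowen_ball_def by auto
  moreover have "open {y. dist ((\<phi>^^k) y) ((\<phi>^^k) x) < \<epsilon>}" for k
    by (intro open_Collect_less continuous_intros cont_funpow[OF assms])
  ultimately show ?thesis by auto
qed

lemma bowen_center: "\<epsilon> > 0 \<Longrightarrow> x \<in> bowen_ball \<phi> n x \<epsilon>"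
  unfolding bowen_ball_def by auto

lemma cover_exists:
  assumes cpt: "compact (UNIV :: 'a::metric_space set)" and cont: "continuous_on UNIV \<phi>"
    and e: "\<epsilon> > 0"
  shows "\<exists>E. finite E \<and> (\<Union>x\<in>E. bowen_ball \<phi> n x \<epsilon>) = (UNIV::'a set)"
proof -
  have "UNIV \<subseteq> (\<Union>x\<in>UNIV. bowen_ball \<phi> n x \<epsilon>)" using bowen_center[OF e] by blast
  then obtain C where "finite C" "UNIV \<subseteq> (\<Union>x\<in>C. bowen_ball \<phi> n x \<epsilon>)"
    using compactE_image[OF cpt, of UNIV "\<lambda>x. bowen_ball \<phi> n x \<epsilon>"] bowen_open[OF cont] by metis
  then show ?thesis by blast
qed

lemma pc_set_ne:
  assumes cpt: "compact (UNIV :: 'a::metric_space set)" and cont: "continuous_on UNIV \<phi>"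
    and e: "\<epsilon> > 0"
  shows "{(\<Sum>x\<in>E. exp ((G::nat \<Rightarrow> 'a \<Rightarrow> real) n x)) | E. finite E \<and> (\<Union>x\<in>E. bowen_ball \<phi> n x \<epsilon>) = (UNIV::'a set)} \<noteq> {}"
proof -
  obtain E where E: "finite E" "(\<Union>x\<in>E. bowen_ball \<phi> n x \<epsilon>) = (UNIV::'a set)"
    using cover_exists[OF cpt cont e] by blast
  have "(\<Sum>x\<in>E. exp (G n x)) \<in> {(\<Sum>x\<in>E. exp ((G::nat \<Rightarrow> 'a \<Rightarrow> real) n x)) | E. finite E \<and> (\<Union>x\<in>E. bowen_ball \<phi> n x \<epsilon>) = (UNIV::'a set)}"
    by (rule CollectI, rule exI[of _ E]) (simp add: E)
  then show ?thesis by (metis empty_iff)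
qed

lemma pc_set_bdd:
  "bdd_below {(\<Sum>x\<in>E. exp ((G::nat \<Rightarrow> 'a \<Rightarrow> real) n x)) | E. finite E \<and> (\<Union>x\<in>E. bowen_ball \<phi> n x \<epsilon>) = (UNIV::'a::metric_space set)}"
proof (rule bdd_belowI[of _ 0])
  fix s assume "s \<in> {(\<Sum>x\<in>E. exp ((G::nat \<Rightarrow> 'a \<Rightarrow> real) n x)) | E. finite E \<and> (\<Union>x\<in>E. bowen_ball \<phi> n x \<epsilon>) = (UNIV::'a::metric_space set)}"
  then obtain E where "s = (\<Sum>x\<in>E. exp (G n x))" by blast
  then show "0 \<le> s" by (simp add: sum_nonneg)
qed

lemma pc_pos:
  assumes cpt: "compact (UNIV :: 'a::metric_space set)" and cont: "continuous_on UNIV \<phi>"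
    and e: "\<epsilon> > 0" and bd: "bounded (range (G n))"
  shows "0 < pressure_cover \<phi> (G :: nat \<Rightarrow> 'a \<Rightarrow> real) n \<epsilon>"
proof -
  obtain B where B: "\<And>x. \<bar>G n x\<bar> \<le> B" using bd unfolding bounded_iff by auto
  have "exp (-B) \<le> pressure_cover \<phi> G n \<epsilon>"
    unfolding pressure_cover_def
  proof (rule cInf_greatest[OF pc_set_ne[OF cpt cont e]])
    fix s assume "s \<in> {(\<Sum>x\<in>E. exp (G n x)) | E. finite E \<and> (\<Union>x\<in>E. bowen_ball \<phi> n x \<epsilon>) = (UNIV::'a set)}"
    then obtain E where E: "finite E" "(\<Union>x\<in>E. bowen_ball \<phi> n x \<epsilon>) = UNIV" "s = (\<Sum>x\<in>E. exp (G n x))" by blast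
    then obtain x0 where x0: "x0 \<in> E" by blast
    have "exp (-B) \<le> exp (G n x0)" using B[of x0] by simp
    also have "\<dots> \<le> (\<Sum>x\<in>E. exp (G n x))"
      by (rule member_le_sum) (use E x0 in auto)
    finally show "exp (-B) \<le> s" using E by simp
  qed
  moreover have "0 < exp (-B)" by simp
  ultimately show ?thesis by linarith
qed

lemma pc_mono:
  assumes cpt: "compact (UNIV :: 'a::metric_space set)" and cont: "continuous_on UNIV \<phi>"
    and e: "0 < \<epsilon>1" "\<epsilon>1 \<le> \<epsilon>2"
  shows "pressure_cover \<phi> (G :: nat \<Rightarrow> 'a \<Rightarrow> real) n \<epsilon>2 \<le> pressure_cover \<phi> G n \<epsilon>1"
  unfolding pressure_cover_def
proof (rule cInf_mono[OF pc_set_ne[OF cpt cont e(1)] pc_set_bdd])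
  fix b assume "b \<in> {(\<Sum>x\<in>E. exp (G n x)) | E. finite E \<and> (\<Union>x\<in>E. bowen_ball \<phi> n x \<epsilon>1) = (UNIV::'a set)}"
  then obtain E where E: "finite E" "(\<Union>x\<in>E. bowen_ball \<phi> n x \<epsilon>1) = UNIV" "b = (\<Sum>x\<in>E. exp (G n x))" by blast
  have "bowen_ball \<phi> n x \<epsilon>1 \<subseteq> bowen_ball \<phi> n x \<epsilon>2" for x
    using e unfolding bowen_ball_def by fastforce
  then have "(\<Union>x\<in>E. bowen_ball \<phi> n x \<epsilon>2) = UNIV" using E(2) by blast
  then show "\<exists>a\<in>{(\<Sum>x\<in>E. exp (G n x)) | E. finite E \<and> (\<Union>x\<in>E. bowen_ball \<phi> n x \<epsilon>2) = (UNIV::'a set)}. a \<le> b"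
    using E by blast
qed

definition Fp :: "('a::metric_space \<Rightarrow> 'a) \<Rightarrow> (nat \<Rightarrow> 'a \<Rightarrow> real) \<Rightarrow> real \<Rightarrow> ereal" where
  "Fp \<phi> G \<epsilon> = limsup (\<lambda>n. ereal (ln (pressure_cover \<phi> G n \<epsilon>) / real n))"

lemma Fp_mono:
  assumes cpt: "compact (UNIV :: 'a::metric_space set)" and cont: "continuous_on UNIV \<phi>"
    and e: "0 < \<epsilon>1" "\<epsilon>1 \<le> \<epsilon>2" and bd: "\<And>n. bounded (range (G n))"
  shows "Fp \<phi> (G :: nat \<Rightarrow> 'a \<Rightarrow> real) \<epsilon>2 \<le> Fp \<phi> G \<epsilon>1"
  unfolding Fp_def
proof (rule Limsup_mono, rule always_eventually, rule allI)
  fix n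
  have p: "0 < pressure_cover \<phi> G n \<epsilon>2" using pc_pos[OF cpt cont _ bd] e by simp
  have "ln (pressure_cover \<phi> G n \<epsilon>2) \<le> ln (pressure_cover \<phi> G n \<epsilon>1)"
    using pc_mono[OF cpt cont e, of G n] p by simp
  then show "ereal (ln (pressure_cover \<phi> G n \<epsilon>2) / real n) \<le> ereal (ln (pressure_cover \<phi> G n \<epsilon>1) / real n)"
    by (simp add: divide_right_mono)
qed

lemma top_pressure_Sup:
  assumes cpt: "compact (UNIV :: 'a::metric_space set)" and cont: "continuous_on UNIV \<phi>"
    and bd: "\<And>n. bounded (range (G n))"
  shows "top_pressure \<phi> (G :: nat \<Rightarrow> 'a \<Rightarrow> real) = (SUP \<epsilon>\<in>{0<..}. Fp \<phi> G \<epsilon>)"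
proof -
  let ?L = "(SUP \<epsilon>\<in>{0<..}. Fp \<phi> G \<epsilon>)"
  have "(Fp \<phi> G \<longlongrightarrow> ?L) (at_right 0)"
  proof (rule order_tendstoI)
    fix a assume "a < ?L"
    then obtain e0 where e0: "e0 > 0" "a < Fp \<phi> G e0" by (auto simp: less_SUP_iff)
    show "eventually (\<lambda>e. a < Fp \<phi> G e) (at_right 0)"
      unfolding eventually_at_right_field
    proof (intro exI[of _ e0] conjI allI impI)
      fix y :: real assume "y > 0" "y < e0"
      then show "a < Fp \<phi> G y" using Fp_mono[OF cpt cont, of y e0 G] bd e0 by force
    qed (use e0 in auto)
  next
    fix a assume a: "?L < a"
    show "eventually (\<lambda>e. Fp \<phi> G e < a) (at_right 0)"
      unfolding eventually_at_right_field
    proof (intro exI[of _ 1] conjI allI impI)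
      fix y :: real assume "y > 0"
      then have "Fp \<phi> G y \<le> ?L" by (intro SUP_upper) auto
      then show "Fp \<phi> G y < a" using a by simp
    qed auto
  qed
  then show ?thesis unfolding top_pressure_def Fp_def[symmetric]
    by (intro tendsto_Lim) auto
qed



lemma funpow_conj:
  assumes "\<And>x. f (t x) = t (g x)"
  shows "(f ^^ k) (t x) = t ((g ^^ k) x)"
  by (induction k) (auto simp: assms)

lemma funpow_cancel:
  assumes "\<And>x. g (f x) = x" and "k \<le> m"
  shows "(g ^^ k) ((f ^^ m) x) = (f ^^ (m - k)) x"
  using assms(2)
proof (induction k)
  case (Suc k)
  then have "(g ^^ Suc k) ((f ^^ m) x) = g ((f ^^ (Suc (m - Suc k))) x)"
    by (simp add: Suc_diff_Suc)
  also have "\<dots> = (f ^^ (m - Suc k)) x" using assms(1) by simp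
  finally show ?case .
qed simp

lemma part_entropy_vimage:
  assumes "surj f" and "\<And>A. measure Q1 A = measure Q2 (f -` A)"
  shows "part_entropy Q1 S = part_entropy Q2 ((\<lambda>A. f -` A) ` S)"
proof -
  have inj: "inj_on (\<lambda>A. f -` A) S"
    by (rule inj_onI) (metis assms(1) surj_image_vimage_eq)
  show ?thesis
    unfolding part_entropy_def sum.reindex[OF inj] o_def assms(2)[symmetric] by (rule refl)
qed

lemma dyn_joinI: "(\<forall>k<n. A k \<in> P) \<Longrightarrow> X = (\<Inter>k<n. (\<phi>^^k) -` A k) \<Longrightarrow> X \<in> dyn_join \<phi> P n"
  unfolding dyn_join_def by blast
lemma dyn_joinE: "X \<in> dyn_join \<phi> P n \<Longrightarrow> \<exists>A. (\<forall>k<n. A k \<in> P) \<and> X = (\<Inter>k<n. (\<phi>^^k) -` A k)"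
  unfolding dyn_join_def by blast

lemma dyn_join_conj:
  assumes conj: "\<And>k x. (\<phi> ^^ k) (\<theta> x) = \<theta> ((\<psi> ^^ k) x)" and invo: "\<And>x. \<theta> (\<theta> x) = x"
  shows "(\<lambda>A. \<theta> -` A) ` dyn_join \<phi> P n = dyn_join \<psi> ((\<lambda>A. \<theta> -` A) ` P) n"
proof -
  have vi: "\<theta> -` (\<Inter>k<n. (\<phi> ^^ k) -` A k) = (\<Inter>k<n. (\<psi> ^^ k) -` (\<theta> -` A k))" for A
    by (simp add: set_eq_iff conj)
  have vv: "\<theta> -` (\<theta> -` C) = C" for C by (simp add: set_eq_iff invo)
  show ?thesis
  proof (rule set_eqI, rule iffI)
    fix X assume "X \<in> (\<lambda>A. \<theta> -` A) ` dyn_join \<phi> P n"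
    then obtain Y where Y: "Y \<in> dyn_join \<phi> P n" "X = \<theta> -` Y" by blast
    obtain A where A: "\<forall>k<n. A k \<in> P" "Y = (\<Inter>k<n. (\<phi> ^^ k) -` A k)"
      using dyn_joinE[OF Y(1)] by blast
    have "X = (\<Inter>k<n. (\<psi> ^^ k) -` (\<theta> -` A k))" unfolding Y(2) A(2) vi ..
    moreover have "\<forall>k<n. \<theta> -` A k \<in> (\<lambda>A. \<theta> -` A) ` P" using A(1) by blast
    ultimately show "X \<in> dyn_join \<psi> ((\<lambda>A. \<theta> -` A) ` P) n"
      by (intro dyn_joinI[where A="\<lambda>k. \<theta> -` A k"]) simp_all
  next
    fix X assume "X \<in> dyn_join \<psi> ((\<lambda>A. \<theta> -` A) ` P) n"
    from dyn_joinE[OF this] obtain B where B: "\<forall>k<n. B k \<in> (\<lambda>A. \<theta> -` A) ` P" "X = (\<Inter>k<n. (\<psi> ^^ k) -` B k)"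
      by blast
    have "X = \<theta> -` (\<Inter>k<n. (\<phi> ^^ k) -` (\<theta> -` B k))"
      unfolding vi vv B(2) ..
    moreover have "\<forall>k<n. \<theta> -` B k \<in> P"
    proof (intro allI impI)
      fix k assume "k < n"
      then obtain C where "C \<in> P" "B k = \<theta> -` C" using B(1) by blast
      then show "\<theta> -` B k \<in> P" using vv by simp
    qed
    moreover have "(\<Inter>k<n. (\<phi> ^^ k) -` (\<theta> -` B k)) \<in> dyn_join \<phi> P n"
      using calculation(2) by (rule dyn_joinI) simp
    ultimately show "X \<in> (\<lambda>A. \<theta> -` A) ` dyn_join \<phi> P n"
      by blast
  qed
qed

lemma all_rev: "(\<forall>k<Suc m. P (m - k) k) \<longleftrightarrow> (\<forall>k<Suc m. P k (m - k))"
proof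
  assume h: "\<forall>k<Suc m. P (m - k) k"
  show "\<forall>k<Suc m. P k (m - k)"
  proof (intro allI impI)
    fix k assume "k < Suc m"
    then have "m - k < Suc m" "m - (m - k) = k" by auto
    then show "P k (m - k)" using h by metis
  qed
next
  assume h: "\<forall>k<Suc m. P k (m - k)"
  show "\<forall>k<Suc m. P (m - k) k"
  proof (intro allI impI)
    fix k assume "k < Suc m"
    then have "m - k < Suc m" "m - (m - k) = k" by auto
    then show "P (m - k) k" using h by metis
  qed
qed

lemma dyn_join_rev:
  assumes c1: "\<And>x. \<psi> (\<phi> x) = x"
  shows "dyn_join \<phi> P (Suc m) = (\<lambda>A. (\<phi> ^^ m) -` A) ` dyn_join \<psi> P (Suc m)"
proof -
  have vi: "(\<phi> ^^ m) -` (\<Inter>k<Suc m. (\<psi> ^^ k) -` A k) = (\<Inter>k<Suc m. (\<phi> ^^ k) -` A (m - k))" for A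
  proof -
    have "(\<phi> ^^ m) -` (\<psi> ^^ k) -` A k = (\<phi> ^^ (m - k)) -` A k" if "k < Suc m" for k
      using funpow_cancel[of \<psi> \<phi> k m, OF c1] that by (auto simp: set_eq_iff)
    then have "(\<phi> ^^ m) -` (\<Inter>k<Suc m. (\<psi> ^^ k) -` A k) = (\<Inter>k<Suc m. (\<phi> ^^ (m - k)) -` A k)"
      by (simp add: vimage_INT)
    also have "\<dots> = (\<Inter>k<Suc m. (\<phi> ^^ k) -` A (m - k))"
    proof (rule set_eqI)
      fix x
      show "x \<in> (\<Inter>k<Suc m. (\<phi> ^^ (m - k)) -` A k) \<longleftrightarrow> x \<in> (\<Inter>k<Suc m. (\<phi> ^^ k) -` A (m - k))"
      proof -
        have "x \<in> (\<Inter>k<Suc m. (\<phi> ^^ (m - k)) -` A k) \<longleftrightarrow> (\<forall>k<Suc m. (\<phi>^^(m-k)) x \<in> A k)" by blast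
        also have "\<dots> \<longleftrightarrow> (\<forall>k<Suc m. (\<phi>^^k) x \<in> A (m - k))"
          by (rule all_rev[where P="\<lambda>i j. (\<phi> ^^ i) x \<in> A j"])
        also have "\<dots> \<longleftrightarrow> x \<in> (\<Inter>k<Suc m. (\<phi> ^^ k) -` A (m - k))" by blast
        finally show ?thesis .
      qed
    qed
    finally show ?thesis .
  qed
  show ?thesis
  proof (rule set_eqI, rule iffI)
    fix X assume "X \<in> dyn_join \<phi> P (Suc m)"
    from dyn_joinE[OF this] obtain A where A: "\<forall>k<Suc m. A k \<in> P" "X = (\<Inter>k<Suc m. (\<phi> ^^ k) -` A k)"
      by blast
    let ?B = "\<lambda>k. A (m - k)"
    have "X = (\<Inter>k<Suc m. (\<phi> ^^ k) -` ?B (m - k))"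
      unfolding A(2) by (intro INF_cong) auto
    then have "X = (\<phi> ^^ m) -` (\<Inter>k<Suc m. (\<psi> ^^ k) -` ?B k)" unfolding vi by simp
    moreover have "\<forall>k<Suc m. ?B k \<in> P" using A(1) by auto
    ultimately show "X \<in> (\<lambda>A. (\<phi> ^^ m) -` A) ` dyn_join \<psi> P (Suc m)"
      by (intro image_eqI[of X _ "\<Inter>k<Suc m. (\<psi> ^^ k) -` ?B k"] dyn_joinI) auto
  next
    fix X assume "X \<in> (\<lambda>A. (\<phi> ^^ m) -` A) ` dyn_join \<psi> P (Suc m)"
    then obtain Y where Y: "Y \<in> dyn_join \<psi> P (Suc m)" "X = (\<phi> ^^ m) -` Y" by blast
    obtain A where A: "\<forall>k<Suc m. A k \<in> P" "Y = (\<Inter>k<Suc m. (\<psi> ^^ k) -` A k)"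
      using dyn_joinE[OF Y(1)] by blast
    have "X = (\<Inter>k<Suc m. (\<phi> ^^ k) -` A (m - k))" using Y(2) A(2) vi by simp
    moreover have "\<forall>k<Suc m. A (m - k) \<in> P" using A(1) by auto
    ultimately show "X \<in> dyn_join \<phi> P (Suc m)"
      by (intro dyn_joinI)
  qed
qed



lemma pressure_le:
  fixes \<phi> :: "'a::metric_space \<Rightarrow> 'a" and G H :: "nat \<Rightarrow> 'a \<Rightarrow> real" and \<tau> \<sigma> :: "nat \<Rightarrow> 'a \<Rightarrow> 'a"
  assumes cpt: "compact (UNIV :: 'a set)" and cont: "continuous_on UNIV \<phi>"
    and bd: "\<And>n. bounded (range (G n))" and bdH: "\<And>n. bounded (range (H n))"
    and HG: "\<And>n x. H n x = G n (\<tau> n x)" and inv1: "\<And>n x. \<tau> n (\<sigma> n x) = x"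
    and inv2: "\<And>n x. \<sigma> n (\<tau> n x) = x"
    and unif: "\<And>\<epsilon>. \<epsilon> > 0 \<Longrightarrow> \<exists>\<delta>>0. \<forall>n x y. y \<in> bowen_ball \<phi> n x \<delta> \<longrightarrow> \<tau> n y \<in> bowen_ball \<phi> n (\<tau> n x) \<epsilon>"
  shows "top_pressure \<phi> G \<le> top_pressure \<phi> H"
proof -
  have pcle: "pressure_cover \<phi> G n \<epsilon> \<le> pressure_cover \<phi> H n \<delta>"
    if e: "\<epsilon> > 0" "\<delta> > 0" and U: "\<forall>n x y. y \<in> bowen_ball \<phi> n x \<delta> \<longrightarrow> \<tau> n y \<in> bowen_ball \<phi> n (\<tau> n x) \<epsilon>"
    for n \<epsilon> \<delta>
    unfolding pressure_cover_def
  proof (rule cInf_mono[OF pc_set_ne[OF cpt cont e(2)] pc_set_bdd])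
    fix b assume "b \<in> {(\<Sum>x\<in>E. exp (H n x)) | E. finite E \<and> (\<Union>x\<in>E. bowen_ball \<phi> n x \<delta>) = (UNIV::'a set)}"
    then obtain E where E: "finite E" "(\<Union>x\<in>E. bowen_ball \<phi> n x \<delta>) = UNIV" "b = (\<Sum>x\<in>E. exp (H n x))"
      by blast
    have fin: "finite (\<tau> n ` E)" using E(1) by simp
    have cov: "(\<Union>x\<in>\<tau> n ` E. bowen_ball \<phi> n x \<epsilon>) = UNIV"
    proof (rule set_eqI, rule iffI)
      fix y :: 'a
      have "\<sigma> n y \<in> (\<Union>x\<in>E. bowen_ball \<phi> n x \<delta>)" using E(2) by simp
      then obtain x where x: "x \<in> E" "\<sigma> n y \<in> bowen_ball \<phi> n x \<delta>" by blast
      then have "\<tau> n (\<sigma> n y) \<in> bowen_ball \<phi> n (\<tau> n x) \<epsilon>" using U by blast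
      then show "y \<in> (\<Union>x\<in>\<tau> n ` E. bowen_ball \<phi> n x \<epsilon>)" using x(1) inv1 by auto
    qed simp
    have inj: "inj_on (\<tau> n) E" by (rule inj_on_inverseI[where g="\<sigma> n"]) (simp add: inv2)
    have sum: "(\<Sum>x\<in>\<tau> n ` E. exp (G n x)) = b"
      unfolding E(3) sum.reindex[OF inj] by (simp add: HG)
    show "\<exists>a\<in>{(\<Sum>x\<in>E. exp (G n x)) | E. finite E \<and> (\<Union>x\<in>E. bowen_ball \<phi> n x \<epsilon>) = (UNIV::'a set)}. a \<le> b"
      using fin cov sum by (intro bexI[of _ "(\<Sum>x\<in>\<tau> n ` E. exp (G n x))"]) auto
  qed
  have Fle: "Fp \<phi> G \<epsilon> \<le> Fp \<phi> H \<delta>"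
    if e: "\<epsilon> > 0" "\<delta> > 0" and U: "\<forall>n x y. y \<in> bowen_ball \<phi> n x \<delta> \<longrightarrow> \<tau> n y \<in> bowen_ball \<phi> n (\<tau> n x) \<epsilon>"
    for \<epsilon> \<delta>
    unfolding Fp_def
  proof (rule Limsup_mono, rule always_eventually, rule allI)
    fix n
    have p: "0 < pressure_cover \<phi> G n \<epsilon>" using pc_pos[OF cpt cont e(1) bd] .
    have "ln (pressure_cover \<phi> G n \<epsilon>) \<le> ln (pressure_cover \<phi> H n \<delta>)"
      using pcle[OF e U, of n] p by simp
    then show "ereal (ln (pressure_cover \<phi> G n \<epsilon>) / real n) \<le> ereal (ln (pressure_cover \<phi> H n \<delta>) / real n)"
      by (simp add: divide_right_mono)
  qed
  show ?thesis
    unfolding top_pressure_Sup[OF cpt cont bd] top_pressure_Sup[OF cpt cont bdH]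
  proof (rule SUP_least)
    fix \<epsilon> :: real assume "\<epsilon> \<in> {0<..}"
    then have e: "\<epsilon> > 0" by simp
    obtain \<delta> where d: "\<delta> > 0" "\<forall>n x y. y \<in> bowen_ball \<phi> n x \<delta> \<longrightarrow> \<tau> n y \<in> bowen_ball \<phi> n (\<tau> n x) \<epsilon>"
      using unif[OF e] by blast
    show "Fp \<phi> G \<epsilon> \<le> (SUP \<epsilon>\<in>{0<..}. Fp \<phi> H \<epsilon>)"
      by (rule SUP_upper2[of \<delta>]) (use d Fle[OF e d(1) d(2)] in auto)
  qed
qed

lemma unif_gen:
  fixes \<phi> \<theta> :: "'a::metric_space \<Rightarrow> 'a" and \<tau> :: "nat \<Rightarrow> 'a \<Rightarrow> 'a" and j :: "nat \<Rightarrow> nat \<Rightarrow> nat"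
  assumes uc: "\<forall>e>0. \<exists>d>0. \<forall>x\<in>UNIV. \<forall>x'\<in>UNIV. dist x' x < d \<longrightarrow> dist (\<theta> x') (\<theta> x) < e"
    and shift: "\<And>n k x. k < n \<Longrightarrow> (\<phi> ^^ k) (\<tau> n x) = \<theta> ((\<phi> ^^ (j n k)) x)"
    and jl: "\<And>n k. k < n \<Longrightarrow> j n k < n"
    and e: "\<epsilon> > 0"
  shows "\<exists>\<delta>>0. \<forall>n x y. y \<in> bowen_ball \<phi> n x \<delta> \<longrightarrow> \<tau> n y \<in> bowen_ball \<phi> n (\<tau> n x) \<epsilon>"
proof -
  obtain d where d: "d > 0" "\<And>x x'. dist x' x < d \<Longrightarrow> dist (\<theta> x') (\<theta> x) < \<epsilon>"
    using uc e by blast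
  show ?thesis
  proof (intro exI[of _ d] conjI allI impI)
    fix n x y assume y: "y \<in> bowen_ball \<phi> n x d"
    show "\<tau> n y \<in> bowen_ball \<phi> n (\<tau> n x) \<epsilon>"
      unfolding bowen_ball_def
    proof (intro CollectI allI impI)
      fix k assume k: "k < n"
      have "dist ((\<phi> ^^ j n k) y) ((\<phi> ^^ j n k) x) < d"
        using y jl[OF k] unfolding bowen_ball_def by blast
      then show "dist ((\<phi> ^^ k) (\<tau> n y)) ((\<phi> ^^ k) (\<tau> n x)) < \<epsilon>"
        unfolding shift[OF k] by (rule d(2))
    qed
  qed (use d in auto)
qed

lemma meas_inv1:
  assumes Q: "Q \<in> invariant_measures \<phi>" and c\<psi>: "continuous_on UNIV \<psi>"
    and i1: "\<And>x. \<psi> (\<phi> x) = x" and i2: "\<And>x. \<phi> (\<psi> x) = x"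
  shows "measure Q (\<phi> -` A) = measure Q A"
proof -
  have sQ: "sets Q = sets borel" and m: "\<phi> \<in> measurable Q borel" and d: "distr Q borel \<phi> = Q"
    using Q unfolding invariant_measures_def by auto
  have spQ: "space Q = UNIV" using sets_eq_imp_space_eq[OF sQ] by simp
  show ?thesis
  proof (cases "A \<in> sets borel")
    case True
    have "measure Q A = measure (distr Q borel \<phi>) A" using d by simp
    also have "\<dots> = measure Q (\<phi> -` A \<inter> space Q)" by (rule measure_distr[OF m True])
    finally show ?thesis using spQ by simp
  next
    case False
    have "\<phi> -` A \<notin> sets borel"
    proof
      assume "\<phi> -` A \<in> sets borel"
      then have "\<psi> -` (\<phi> -` A) \<inter> space borel \<in> sets borel"
        using measurable_sets[OF borel_measurable_continuous_onI[OF c\<psi>]] by blast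
      moreover have "\<psi> -` (\<phi> -` A) \<inter> space borel = A" using i2 by auto
      ultimately show False using False by simp
    qed
    then show ?thesis using False sQ by (simp add: measure_notin_sets)
  qed
qed

lemma meas_inv:
  assumes Q: "Q \<in> invariant_measures \<phi>" and c\<psi>: "continuous_on UNIV \<psi>"
    and i1: "\<And>x. \<psi> (\<phi> x) = x" and i2: "\<And>x. \<phi> (\<psi> x) = x"
  shows "measure Q ((\<phi> ^^ m) -` A) = measure Q A"
proof (induction m)
  case (Suc m)
  have "(\<phi> ^^ Suc m) -` A = \<phi> -` ((\<phi> ^^ m) -` A)" by (metis funpow_Suc_right vimage_comp)
  then have "measure Q ((\<phi> ^^ Suc m) -` A) = measure Q (\<phi> -` ((\<phi> ^^ m) -` A))" by (simp only:)
  also have "\<dots> = measure Q ((\<phi> ^^ m) -` A)" by (rule meas_inv1[OF assms])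
  also have "\<dots> = measure Q A" by (rule Suc.IH)
  finally show ?case .
qed simp

lemma entropy_conj:
  fixes \<phi> \<theta> \<psi> :: "'a::topological_space \<Rightarrow> 'a"
  assumes Q: "Q \<in> invariant_measures \<phi>" and c\<theta>: "continuous_on UNIV \<theta>" and invo: "\<And>x. \<theta> (\<theta> x) = x"
    and conj: "\<And>k x. (\<phi> ^^ k) (\<theta> x) = \<theta> ((\<psi> ^^ k) x)"
    and EQ: "\<And>P n. part_entropy Q (dyn_join \<psi> P n) = part_entropy Q (dyn_join \<phi> P n)"
  shows "ks_entropy \<phi> (distr Q borel \<theta>) = ks_entropy \<phi> Q"
proof -
  define Q' where "Q' = distr Q borel \<theta>"
  define T where "T = (\<lambda>S. (\<lambda>A. \<theta> -` A) ` (S :: 'a set set))"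
  have sQ: "sets Q = sets borel" using Q unfolding invariant_measures_def by auto
  have spQ: "space Q = UNIV" using sets_eq_imp_space_eq[OF sQ] by simp
  have \<theta>b: "\<theta> \<in> borel_measurable borel" by (rule borel_measurable_continuous_onI[OF c\<theta>])
  have \<theta>m: "\<theta> \<in> measurable Q borel" using \<theta>b measurable_cong_sets[OF sQ refl] by blast
  have sQ': "sets Q' = sets borel" unfolding Q'_def by simp
  have spQ': "space Q' = UNIV" unfolding Q'_def by simp
  have FP: "fin_partitions Q' = fin_partitions Q"
    unfolding fin_partitions_def sQ sQ' spQ spQ' ..
  have vb: "\<theta> -` A \<in> sets borel" if "A \<in> sets borel" for A
    using measurable_sets[OF \<theta>b that] by simp
  have vv: "\<theta> -` (\<theta> -` C) = C" for C by (simp add: set_eq_iff invo)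
  have meas: "measure Q' A = measure Q (\<theta> -` A)" for A
  proof (cases "A \<in> sets borel")
    case True
    then show ?thesis unfolding Q'_def using measure_distr[OF \<theta>m True] spQ by simp
  next
    case False
    have "\<theta> -` A \<notin> sets borel"
    proof
      assume "\<theta> -` A \<in> sets borel"
      then have "\<theta> -` (\<theta> -` A) \<in> sets borel" by (rule vb)
      then show False using False vv by simp
    qed
    then show ?thesis using False sQ sQ' by (simp add: measure_notin_sets)
  qed
  have surj: "surj \<theta>" by (metis invo surjI)
  have pe: "part_entropy Q' S = part_entropy Q (T S)" for S
    unfolding T_def by (rule part_entropy_vimage[OF surj meas])
  have TT: "T (T S) = S" for S unfolding T_def image_image vv by simp
  have TP: "T P \<in> fin_partitions Q" if "P \<in> fin_partitions Q" for P
  proof -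
    have P: "finite P" "P \<subseteq> sets borel" "disjoint P" "\<Union>P = UNIV"
      using that unfolding fin_partitions_def sQ spQ by auto
    have "finite (T P)" using P(1) unfolding T_def by simp
    moreover have "T P \<subseteq> sets borel" using P(2) vb unfolding T_def by auto
    moreover have "disjoint (T P)"
      unfolding disjoint_def pairwise_def
    proof (intro ballI impI)
      fix X Y assume X: "X \<in> T P" and Y: "Y \<in> T P" and ne: "X \<noteq> Y"
      obtain A where A: "A \<in> P" "X = \<theta> -` A" using X unfolding T_def by blast
      obtain B where B: "B \<in> P" "Y = \<theta> -` B" using Y unfolding T_def by blast
      have "A \<noteq> B" using ne A B by blast
      then have "disjnt A B" using P(3) A(1) B(1) unfolding disjoint_def pairwise_def by blast
      then show "disjnt X Y" using A(2) B(2) unfolding disjnt_def by auto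
    qed
    moreover have "\<Union>(T P) = UNIV" using P(4) unfolding T_def by auto
    ultimately show ?thesis unfolding fin_partitions_def sQ spQ by simp
  qed
  have TFP: "T ` fin_partitions Q = fin_partitions Q"
  proof
    show "T ` fin_partitions Q \<subseteq> fin_partitions Q" using TP by blast
    show "fin_partitions Q \<subseteq> T ` fin_partitions Q"
    proof
      fix P assume "P \<in> fin_partitions Q"
      then have "T P \<in> fin_partitions Q" by (rule TP)
      then show "P \<in> T ` fin_partitions Q" by (rule image_eqI[of P T "T P", OF TT[symmetric]])
    qed
  qed
  have key: "part_entropy Q' (dyn_join \<phi> (T P) n) = part_entropy Q (dyn_join \<phi> P n)" for P n
  proof -
    have "part_entropy Q' (dyn_join \<phi> (T P) n) = part_entropy Q (T (dyn_join \<phi> (T P) n))" by (rule pe)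
    also have "T (dyn_join \<phi> (T P) n) = dyn_join \<psi> (T (T P)) n"
      unfolding T_def by (rule dyn_join_conj[OF conj invo])
    also have "\<dots> = dyn_join \<psi> P n" by (simp only: TT)
    finally show ?thesis using EQ by simp
  qed
  have "ks_entropy \<phi> Q' = (SUP P\<in>T ` fin_partitions Q. ereal (lim (\<lambda>n. part_entropy Q' (dyn_join \<phi> P n) / real n)))"
    unfolding ks_entropy_def FP TFP ..
  also have "\<dots> = (SUP P\<in>fin_partitions Q. ereal (lim (\<lambda>n. part_entropy Q' (dyn_join \<phi> (T P) n) / real n)))"
    by (simp only: image_image)
  also have "\<dots> = ks_entropy \<phi> Q"
    unfolding ks_entropy_def key ..
  finally show ?thesis unfolding Q'_def .
qed



lemma EQ_rev:
  assumes Q: "Q \<in> invariant_measures \<phi>" and c\<psi>: "continuous_on UNIV \<psi>"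
    and i1: "\<And>x. \<psi> (\<phi> x) = x" and i2: "\<And>x. \<phi> (\<psi> x) = x"
  shows "part_entropy Q (dyn_join \<psi> P n) = part_entropy Q (dyn_join \<phi> P n)"
proof (cases n)
  case 0
  then show ?thesis by (simp add: dyn_join_def)
next
  case (Suc m)
  have surj: "surj (\<phi> ^^ m)"
  proof (rule surjI)
    fix x show "(\<phi> ^^ m) ((\<psi> ^^ m) x) = x" using funpow_cancel[where g=\<phi> and f=\<psi> and k=m and m=m, OF i2] by simp
  qed
  have "part_entropy Q (dyn_join \<psi> P n) = part_entropy Q ((\<lambda>A. (\<phi> ^^ m) -` A) ` dyn_join \<psi> P n)"
    by (rule part_entropy_vimage[OF surj]) (simp add: meas_inv[OF Q c\<psi> i1 i2])
  also have "\<dots> = part_entropy Q (dyn_join \<phi> P n)"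
    unfolding Suc dyn_join_rev[where \<psi>=\<psi> and \<phi>=\<phi> and P=P and m=m, OF i1] ..
  finally show ?thesis .
qed

theorem lemma3p7:
  fixes \<phi> \<theta> :: "'a::metric_space \<Rightarrow> 'a"
  assumes cpt: "compact (UNIV :: 'a set)"
    and cont: "continuous_on UNIV \<phi>"
    and inv: "homeomorphism UNIV UNIV \<theta> \<theta>"
    and CR: "\<phi> = \<theta> \<circ> \<phi> \<circ> \<theta> \<or> (\<exists>\<psi>. homeomorphism UNIV UNIV \<phi> \<psi> \<and> \<psi> = \<theta> \<circ> \<phi> \<circ> \<theta>)"
  shows "(\<forall>Q\<in>invariant_measures \<phi>. ks_entropy \<phi> (distr Q borel \<theta>) = ks_entropy \<phi> Q)
     \<and> (\<phi> = \<theta> \<circ> \<phi> \<circ> \<theta> \<longrightarrow>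
           (\<forall>G\<in>approx_additive \<phi>. top_pressure \<phi> (\<lambda>n. G n \<circ> \<theta>) = top_pressure \<phi> G))
     \<and> ((\<exists>\<psi>. homeomorphism UNIV UNIV \<phi> \<psi> \<and> \<psi> = \<theta> \<circ> \<phi> \<circ> \<theta>) \<longrightarrow>
           (\<forall>G\<in>approx_additive \<phi>.
              top_pressure \<phi> (\<lambda>n. G n \<circ> (\<theta> \<circ> \<phi> ^^ (n - 1))) = top_pressure \<phi> G))"
proof -
  have invo: "\<And>x. \<theta> (\<theta> x) = x" and c\<theta>: "continuous_on UNIV \<theta>"
    using inv unfolding homeomorphism_def by auto
  have uc: "\<forall>e>0. \<exists>d>0. \<forall>x\<in>UNIV. \<forall>x'\<in>UNIV. dist x' x < d \<longrightarrow> dist (\<theta> x') (\<theta> x) < e"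
    using compact_uniformly_continuous[OF c\<theta> cpt] unfolding uniformly_continuous_on_def .
  have bdG: "\<And>n. bounded (range (G n))" if "G \<in> approx_additive \<phi>" for G
    using that unfolding approx_additive_def by auto
  have bdc: "bounded (range (G n \<circ> f))" if "bounded (range (G n))" for G :: "nat \<Rightarrow> 'a \<Rightarrow> real" and n f
    by (rule bounded_subset[OF that]) auto
  have caseC: "(\<forall>Q\<in>invariant_measures \<phi>. ks_entropy \<phi> (distr Q borel \<theta>) = ks_entropy \<phi> Q)
     \<and> (\<forall>G\<in>approx_additive \<phi>. top_pressure \<phi> (\<lambda>n. G n \<circ> \<theta>) = top_pressure \<phi> G)"
    if C: "\<phi> = \<theta> \<circ> \<phi> \<circ> \<theta>"
  proof -
    have c1: "\<phi> (\<theta> x) = \<theta> (\<phi> x)" for x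
    proof -
      have "\<phi> (\<theta> x) = (\<theta> \<circ> \<phi> \<circ> \<theta>) (\<theta> x)" using C by simp
      then show ?thesis by (simp add: invo)
    qed
    have conj: "(\<phi> ^^ k) (\<theta> x) = \<theta> ((\<phi> ^^ k) x)" for k x by (rule funpow_conj[where f=\<phi> and t=\<theta>, OF c1])
    have ent: "ks_entropy \<phi> (distr Q borel \<theta>) = ks_entropy \<phi> Q" if "Q \<in> invariant_measures \<phi>" for Q
      by (rule entropy_conj[OF that c\<theta> invo conj]) (rule refl)
    have unif: "\<exists>\<delta>>0. \<forall>n x y. y \<in> bowen_ball \<phi> n x \<delta> \<longrightarrow> \<theta> y \<in> bowen_ball \<phi> n (\<theta> x) \<epsilon>"
      if "\<epsilon> > 0" for \<epsilon>
      using unif_gen[where \<phi>=\<phi> and \<theta>=\<theta> and \<tau>="\<lambda>n. \<theta>" and j="\<lambda>n k. k", OF uc conj _ that] by simp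
    have pr: "top_pressure \<phi> (\<lambda>n. G n \<circ> \<theta>) = top_pressure \<phi> G" if G: "G \<in> approx_additive \<phi>" for G
    proof (rule antisym)
      show "top_pressure \<phi> G \<le> top_pressure \<phi> (\<lambda>n. G n \<circ> \<theta>)"
        by (rule pressure_le[OF cpt cont bdG[OF G] bdc[OF bdG[OF G]], where \<tau>="\<lambda>n. \<theta>" and \<sigma>="\<lambda>n. \<theta>"])
           (simp_all add: invo unif)
      show "top_pressure \<phi> (\<lambda>n. G n \<circ> \<theta>) \<le> top_pressure \<phi> G"
        by (rule pressure_le[OF cpt cont bdc[OF bdG[OF G]] bdG[OF G], where \<tau>="\<lambda>n. \<theta>" and \<sigma>="\<lambda>n. \<theta>"])
           (simp_all add: invo unif)
    qed
    show ?thesis using ent pr by blast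
  qed
  have caseR: "(\<forall>Q\<in>invariant_measures \<phi>. ks_entropy \<phi> (distr Q borel \<theta>) = ks_entropy \<phi> Q)
     \<and> (\<forall>G\<in>approx_additive \<phi>. top_pressure \<phi> (\<lambda>n. G n \<circ> (\<theta> \<circ> \<phi> ^^ (n - 1))) = top_pressure \<phi> G)"
    if R: "\<exists>\<psi>. homeomorphism UNIV UNIV \<phi> \<psi> \<and> \<psi> = \<theta> \<circ> \<phi> \<circ> \<theta>"
  proof -
    obtain \<psi> where h: "homeomorphism UNIV UNIV \<phi> \<psi>" and p: "\<psi> = \<theta> \<circ> \<phi> \<circ> \<theta>" using R by blast
    have i1: "\<And>x. \<psi> (\<phi> x) = x" and i2: "\<And>x. \<phi> (\<psi> x) = x" and c\<psi>: "continuous_on UNIV \<psi>"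
      using h unfolding homeomorphism_def by auto
    have c1: "\<phi> (\<theta> x) = \<theta> (\<psi> x)" for x using p invo by simp
    have c2: "\<psi> (\<theta> x) = \<theta> (\<phi> x)" for x using p invo by simp
    have conj: "(\<phi> ^^ k) (\<theta> x) = \<theta> ((\<psi> ^^ k) x)" for k x by (rule funpow_conj[where f=\<phi> and t=\<theta> and g=\<psi>, OF c1])
    have conj2: "(\<psi> ^^ k) (\<theta> x) = \<theta> ((\<phi> ^^ k) x)" for k x by (rule funpow_conj[where f=\<psi> and t=\<theta> and g=\<phi>, OF c2])
    have ent: "ks_entropy \<phi> (distr Q borel \<theta>) = ks_entropy \<phi> Q" if Q: "Q \<in> invariant_measures \<phi>" for Q
      by (rule entropy_conj[OF Q c\<theta> invo conj]) (rule EQ_rev[OF Q c\<psi> i1 i2])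
    define \<tau> where "\<tau> = (\<lambda>n. \<theta> \<circ> \<phi> ^^ (n - 1))"
    define \<sigma> where "\<sigma> = (\<lambda>n. \<psi> ^^ (n - 1) \<circ> \<theta>)"
    have inv1: "\<tau> n (\<sigma> n x) = x" for n x
      unfolding \<tau>_def \<sigma>_def using funpow_cancel[where g=\<phi> and f=\<psi> and k="n - 1" and m="n - 1", OF i2] invo by simp
    have inv2: "\<sigma> n (\<tau> n x) = x" for n x
      unfolding \<tau>_def \<sigma>_def using funpow_cancel[where g=\<psi> and f=\<phi> and k="n - 1" and m="n - 1", OF i1] invo by simp
    have sh1: "(\<phi> ^^ k) (\<tau> n x) = \<theta> ((\<phi> ^^ (n - 1 - k)) x)" if "k < n" for n k x
      unfolding \<tau>_def using conj funpow_cancel[where g=\<psi> and f=\<phi> and k=k and m="n - 1", OF i1] that by simp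
    have sh2: "(\<phi> ^^ k) (\<sigma> n x) = \<theta> ((\<phi> ^^ (n - 1 - k)) x)" if "k < n" for n k x
    proof -
      have "(\<phi> ^^ k) ((\<psi> ^^ (n - 1)) (\<theta> x)) = (\<psi> ^^ (n - 1 - k)) (\<theta> x)"
        by (rule funpow_cancel[where g=\<phi> and f=\<psi> and k=k and m="n - 1", OF i2]) (use that in simp)
      also have "\<dots> = \<theta> ((\<phi> ^^ (n - 1 - k)) x)" by (rule conj2)
      finally show ?thesis unfolding \<sigma>_def by simp
    qed
    have jl: "n - 1 - k < n" if "k < n" for n k :: nat using that by simp
    have u1: "\<exists>\<delta>>0. \<forall>n x y. y \<in> bowen_ball \<phi> n x \<delta> \<longrightarrow> \<tau> n y \<in> bowen_ball \<phi> n (\<tau> n x) \<epsilon>"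
      if "\<epsilon> > 0" for \<epsilon>
      by (rule unif_gen[where \<phi>=\<phi> and \<theta>=\<theta> and \<tau>=\<tau> and j="\<lambda>n k. n - 1 - k", OF uc sh1 jl that])
    have u2: "\<exists>\<delta>>0. \<forall>n x y. y \<in> bowen_ball \<phi> n x \<delta> \<longrightarrow> \<sigma> n y \<in> bowen_ball \<phi> n (\<sigma> n x) \<epsilon>"
      if "\<epsilon> > 0" for \<epsilon>
      by (rule unif_gen[where \<phi>=\<phi> and \<theta>=\<theta> and \<tau>=\<sigma> and j="\<lambda>n k. n - 1 - k", OF uc sh2 jl that])
    have pr: "top_pressure \<phi> (\<lambda>n. G n \<circ> (\<theta> \<circ> \<phi> ^^ (n - 1))) = top_pressure \<phi> G"
      if G: "G \<in> approx_additive \<phi>" for G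
    proof -
      have eqH: "(\<lambda>n. G n \<circ> (\<theta> \<circ> \<phi> ^^ (n - 1))) = (\<lambda>n. G n \<circ> \<tau> n)" unfolding \<tau>_def ..
      show ?thesis unfolding eqH
      proof (rule antisym)
        show "top_pressure \<phi> G \<le> top_pressure \<phi> (\<lambda>n. G n \<circ> \<tau> n)"
          by (rule pressure_le[OF cpt cont bdG[OF G] bdc[OF bdG[OF G]], where \<tau>=\<tau> and \<sigma>=\<sigma>])
             (simp_all add: inv1 inv2 u1)
        show "top_pressure \<phi> (\<lambda>n. G n \<circ> \<tau> n) \<le> top_pressure \<phi> G"
          by (rule pressure_le[OF cpt cont bdc[OF bdG[OF G]] bdG[OF G], where \<tau>=\<sigma> and \<sigma>=\<tau>])
             (simp_all add: inv1 inv2 u2)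
      qed
    qed
    show ?thesis using ent pr by blast
  qed
  show ?thesis using CR caseC caseR by blast
qed

end
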